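(* Let $A$ and $B$ be Young functions such that $B \ll A$ near infinity. Then there exists a Young function $C$ such that $B \ll C$ and $C \ll A$ near infinity.
   Context: A Young function is a convex function $A:[0,\infty)\to[0,\infty]$ with $A(0)=0$ which is neither identically $0$ nor identically $+\infty$. For Young functions $A,B$, one says that $B$ increases essentially more slowly than $A$ near infinity, written $B\ll A$, if $B$ is finite valued and $\lim_{t\to\infty} B(\lambda t)/A(t)=0$ for every $\lambda>0$. *)

theory Defs
  imports "HOL-Analysis.Analysis" "HOL-Library.Extended_Nonnegative_Real"
begin

(* Functions [0,\<infinity>) \<rightarrow> [0,\<infinity>] are modelled as real \<Rightarrow> ennreal; only values on [0,\<infinity>) matter. *)

definition young_function :: "(real \<Rightarrow> ennreal) \<Rightarrow> bool" where
  "young_function A \<longleftrightarrow>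
     (\<forall>s\<ge>0. \<forall>t\<ge>0. \<forall>\<mu>::real. 0 \<le> \<mu> \<and> \<mu> \<le> 1 \<longrightarrow>
        A (\<mu> * s + (1 - \<mu>) * t) \<le> ennreal \<mu> * A s + ennreal (1 - \<mu>) * A t)
     \<and> A 0 = 0
     \<and> \<not> (\<forall>t\<ge>0. A t = 0)
     \<and> \<not> (\<forall>t\<ge>0. A t = top)"

definition ess_slower :: "(real \<Rightarrow> ennreal) \<Rightarrow> (real \<Rightarrow> ennreal) \<Rightarrow> bool" where
  "ess_slower B A \<longleftrightarrow>
     (\<forall>t\<ge>0. B t < top) \<and>
     (\<forall>c::real. c > 0 \<longrightarrow> ((\<lambda>t. B (c * t) / A t) \<longlongrightarrow> 0) at_top)"

end

theory Submission
  imports Defs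
begin

lemma L1: fixes x y :: ennreal assumes "x / y \<le> ennreal e" "e > 0" shows "x \<le> ennreal e * y"
proof (cases "y = 0")
  case True
  then show ?thesis using assms by (cases "x = 0") (auto simp: ennreal_divide_zero divide_ennreal_def top_unique)
next
  case f: False
  show ?thesis
  proof (cases "y = top")
    case True then show ?thesis using assms by (simp add: ennreal_mult_top)
  next
    case False
    have "x = x / y * y" using f False by (simp add: ennreal_divide_times top.not_eq_extremum)
    also have "\<dots> \<le> ennreal e * y" using assms(1) by (rule mult_right_mono) simp
    finally show ?thesis .
  qed
qed

lemma L2: fixes x y :: ennreal assumes "x \<le> ennreal e * y" "e \<ge> 0" shows "x / y \<le> ennreal e"
  by (metis assms(1) divide_less_ennreal ennreal_zero_less_divide
    less_le_not_le mult_divide_eq_ennreal mult_nonneg_nonpos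
    order.order_iff_strict zero_le)

lemma L3: fixes f :: "real \<Rightarrow> ennreal" assumes "\<And>e. e > 0 \<Longrightarrow> eventually (\<lambda>x. f x \<le> ennreal e) at_top"
  shows "(f \<longlongrightarrow> 0) at_top"
proof (rule order_tendsto_iff[THEN iffD2], intro conjI allI impI)
  fix a :: ennreal assume "a < 0" then show "eventually (\<lambda>x. a < f x) at_top" by simp
next
  fix a :: ennreal assume a: "0 < a"
  obtain b where b: "0 < b" "b < a" using dense[OF a] by blast
  have bt: "b < top" using b(2) by (rule less_le_trans) simp
  define e where "e = enn2real b"
  have be: "ennreal e = b" unfolding e_def using bt by simp
  have e0: "0 < e" unfolding e_def using b(1) bt by (simp add: enn2real_positive_iff)
  have "eventually (\<lambda>x. f x \<le> ennreal e) at_top" by (rule assms[OF e0])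
  then show "eventually (\<lambda>x. f x < a) at_top"
  proof (rule eventually_mono)
    fix x assume "f x \<le> ennreal e"
    then show "f x < a" using b(2) be by (metis le_less_trans)
  qed
qed

lemma L4: fixes x :: ennreal assumes "0 \<le> m" "m \<le> 1" shows "ennreal m * x \<le> x"
  by (simp add: assms(2) mult.commute mult_left_le)

lemma L5: fixes f :: "real \<Rightarrow> ennreal" assumes "(f \<longlongrightarrow> 0) at_top" "e > 0"
  shows "eventually (\<lambda>x. f x \<le> ennreal e) at_top"
proof -
  have "eventually (\<lambda>x. f x < ennreal e) at_top"
    using order_tendsto_iff[THEN iffD1, OF assms(1)] assms(2) by auto
  then show ?thesis by eventually_elim auto
qed

lemma yf_scale:
  assumes "young_function A" "0 \<le> m" "m \<le> 1" "0 \<le> x"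
  shows "A (m * x) \<le> ennreal m * A x"
proof -
  have "A (m * x + (1 - m) * 0) \<le> ennreal m * A x + ennreal (1 - m) * A 0"
    using assms unfolding young_function_def by blast
  moreover have "A 0 = 0" using assms(1) unfolding young_function_def by blast
  ultimately show ?thesis by simp
qed

lemma yf_mono:
  assumes "young_function A" "0 \<le> s" "s \<le> t"
  shows "A s \<le> A t"
proof (cases "t = 0")
  case True then show ?thesis using assms by simp
next
  case False
  then have t: "t > 0" using assms by simp
  have "A s = A ((s / t) * t)" using t by simp
  also have "\<dots> \<le> ennreal (s / t) * A t"
    using yf_scale[OF assms(1), of "s/t" t] assms t by simp
  also have "\<dots> \<le> A t" using L4[of "s/t"] assms t by simp
  finally show ?thesis .
qed

theorem proposition2p6:
  fixes A B :: "real \<Rightarrow> ennreal"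
  assumes "young_function A" and "young_function B" and "ess_slower B A"
  shows "\<exists>C. young_function C \<and> ess_slower B C \<and> ess_slower C A"
proof -
  have YA: "young_function A" and YB: "young_function B" by fact+
  have Bfin: "\<And>t. t \<ge> 0 \<Longrightarrow> B t < top" using assms(3) unfolding ess_slower_def by blast
  have Blim: "\<And>c. c > 0 \<Longrightarrow> ((\<lambda>t. B (c * t) / A t) \<longlongrightarrow> 0) at_top"
    using assms(3) unfolding ess_slower_def by blast
  have B0: "B 0 = 0" using YB unfolding young_function_def by blast
  have "\<forall>n::nat. \<exists>S. \<forall>s\<ge>S. B ((real n + 1)^2 * s) / A s \<le> ennreal (1 / (real n + 1))"
  proof
    fix n :: nat
    have "eventually (\<lambda>s. B ((real n + 1)^2 * s) / A s \<le> ennreal (1 / (real n + 1))) at_top"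
      by (rule L5[OF Blim]) auto
    then show "\<exists>S. \<forall>s\<ge>S. B ((real n + 1)^2 * s) / A s \<le> ennreal (1 / (real n + 1))"
      by (simp add: eventually_at_top_linorder)
  qed
  then obtain S where S: "\<And>n s. s \<ge> S n \<Longrightarrow> B ((real n + 1)^2 * s) / A s \<le> ennreal (1 / (real n + 1))"
    by metis
  define T where "T n = max (real n) (real n * S n)" for n
  define D where "D n t = B (real n * max 0 (t - T n))" for n t
  define C where "C t = (SUP n. D n t)" for t
  have T1: "T n \<ge> real n" "T n \<ge> 0" "T n \<ge> real n * S n" for n unfolding T_def by auto
  have DC: "D n t \<le> C t" for n t unfolding C_def by (rule SUP_upper) simp
  have D0: "t \<le> T n \<Longrightarrow> D n t = 0" for n t unfolding D_def using B0 by simp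
  have C0: "C 0 = 0" unfolding C_def using D0 T1 by simp
  have Cfin: "C t < top" if t: "t \<ge> 0" for t
  proof -
    define N where "N = nat \<lceil>t\<rceil>"
    have "D n t \<le> B (real N * t)" for n
    proof (cases "t \<le> T n")
      case True then show ?thesis using D0 by simp
    next
      case False
      then have "real n < t" using T1[of n] by linarith
      then have nN: "real n \<le> real N" unfolding N_def by linarith
      have "real n * max 0 (t - T n) \<le> real N * t"
        using nN T1[of n] t False by (intro mult_mono) auto
      then show ?thesis unfolding D_def using YB False by (intro yf_mono) auto
    qed
    then have "C t \<le> B (real N * t)" unfolding C_def by (rule SUP_least)
    also have "\<dots> < top" using Bfin t by simp
    finally show ?thesis .
  qed
  have Dconv: "D n (m * s + (1 - m) * t) \<le> ennreal m * D n s + ennreal (1 - m) * D n t"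
    if st: "s \<ge> 0" "t \<ge> 0" "0 \<le> m" "m \<le> 1" for n s t m
  proof -
    define g where "g x = real n * max 0 (x - T n)" for x
    have g0: "g x \<ge> 0" for x unfolding g_def by simp
    have "max 0 (m * s + (1 - m) * t - T n) \<le> m * max 0 (s - T n) + (1 - m) * max 0 (t - T n)"
    proof -
      have e: "m * s + (1 - m) * t - T n = m * (s - T n) + (1 - m) * (t - T n)" by algebra
      have "m * (s - T n) \<le> m * max 0 (s - T n)" using st by (intro mult_left_mono) auto
      moreover have "(1 - m) * (t - T n) \<le> (1 - m) * max 0 (t - T n)" using st by (intro mult_left_mono) auto
      moreover have "0 \<le> m * max 0 (s - T n) + (1 - m) * max 0 (t - T n)" using st by simp
      ultimately show ?thesis unfolding e by linarith
    qed
    then have "real n * max 0 (m * s + (1 - m) * t - T n) \<le> real n * (m * max 0 (s - T n) + (1 - m) * max 0 (t - T n))"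
      by (rule mult_left_mono) simp
    then have "g (m * s + (1 - m) * t) \<le> m * g s + (1 - m) * g t"
      unfolding g_def by (simp only: algebra_simps)
    then have "B (g (m * s + (1 - m) * t)) \<le> B (m * g s + (1 - m) * g t)"
      using YB g0 by (intro yf_mono) auto
    also have "\<dots> \<le> ennreal m * B (g s) + ennreal (1 - m) * B (g t)"
      using YB g0 st unfolding young_function_def by blast
    finally show ?thesis unfolding D_def g_def .
  qed
  have YC: "young_function C"
    unfolding young_function_def
  proof (intro conjI allI impI)
    fix s t m :: real assume st: "0 \<le> s" "0 \<le> t" "0 \<le> m \<and> m \<le> 1"
    show "C (m * s + (1 - m) * t) \<le> ennreal m * C s + ennreal (1 - m) * C t"
      unfolding C_def[of "m * s + (1 - m) * t"]
    proof (rule SUP_least)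
      fix n
      have "D n (m * s + (1 - m) * t) \<le> ennreal m * D n s + ennreal (1 - m) * D n t"
        using Dconv st by blast
      also have "\<dots> \<le> ennreal m * C s + ennreal (1 - m) * C t"
        by (intro add_mono mult_left_mono DC) auto
      finally show "D n (m * s + (1 - m) * t) \<le> ennreal m * C s + ennreal (1 - m) * C t" .
    qed
  next
    show "C 0 = 0" by (rule C0)
  next
    obtain t0 where t0: "t0 \<ge> 0" "B t0 \<noteq> 0" using YB unfolding young_function_def by blast
    have "D 1 (t0 + T 1) = B t0" unfolding D_def using t0 by simp
    then have "C (t0 + T 1) \<noteq> 0" using DC[of 1 "t0 + T 1"] t0 by (metis le_zero_eq)
    moreover have "t0 + T 1 \<ge> 0" using t0 T1[of 1] by simp
    ultimately show "\<not> (\<forall>t\<ge>0. C t = 0)" by blast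
  next
    show "\<not> (\<forall>t\<ge>0. C t = top)"
    proof
      assume "\<forall>t\<ge>0. C t = top"
      then have "C 0 = top" by simp
      then show False using C0 by simp
    qed
  qed
  have BC: "ess_slower B C"
    unfolding ess_slower_def
  proof (intro conjI allI impI)
    fix t :: real assume "t \<ge> 0" then show "B t < top" by (rule Bfin)
  next
    fix c :: real assume c: "c > 0"
    show "((\<lambda>t. B (c * t) / C t) \<longlongrightarrow> 0) at_top"
    proof (rule L3)
      fix e :: real assume e: "e > 0"
      define n where "n = nat \<lceil>2 * c / e\<rceil> + nat \<lceil>2 * c\<rceil> + 1"
      have n1: "real n \<ge> 2 * c / e" "real n \<ge> 2 * c" "real n > 0" unfolding n_def by linarith+
      have ce: "2 * c / real n \<le> e" using n1 e by (simp add: divide_le_eq mult.commute pos_divide_le_eq)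
      have ce1: "2 * c / real n \<le> 1" using n1 by simp
      show "eventually (\<lambda>t. B (c * t) / C t \<le> ennreal e) at_top"
        using eventually_ge_at_top[of "2 * T n"]
      proof eventually_elim
        case (elim t)
        have tT: "t - T n \<ge> 0" "t \<ge> 0" using elim T1[of n] by linarith+
        define x where "x = real n * (t - T n)"
        have x0: "x \<ge> 0" unfolding x_def using tT by simp
        have Dx: "D n t = B x" unfolding D_def x_def using tT by simp
        have "c * t \<le> (2 * c / real n) * x"
          unfolding x_def using n1 c elim by (simp add: field_simps)
        then have "B (c * t) \<le> B ((2 * c / real n) * x)"
          using YB c tT by (intro yf_mono) auto
        also have "\<dots> \<le> ennreal (2 * c / real n) * B x"
          using yf_scale[OF YB _ ce1 x0] c n1 by simp
        also have "\<dots> \<le> ennreal e * C t"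
          using Dx DC[of n t] ce by (intro mult_mono) (auto simp: ennreal_leI)
        finally show ?case using e by (intro L2) auto
      qed
    qed
  qed
  have CA: "ess_slower C A"
    unfolding ess_slower_def
  proof (intro conjI allI impI)
    fix t :: real assume "t \<ge> 0" then show "C t < top" by (rule Cfin)
  next
    fix c :: real assume c: "c > 0"
    show "((\<lambda>t. C (c * t) / A t) \<longlongrightarrow> 0) at_top"
    proof (rule L3)
      fix e :: real assume e: "e > 0"
      define N where "N = nat \<lceil>c\<rceil> + nat \<lceil>1 / e\<rceil> + 1"
      have N1: "real N \<ge> c" "real N > 1 / e" "real N \<ge> 1" unfolding N_def by linarith+
      have Nc: "real N * c > 0" using N1 c by simp
      have ev: "eventually (\<lambda>t. B ((real N * c) * t) / A t \<le> ennreal e) at_top"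
        by (rule L5[OF Blim[OF Nc] e])
      show "eventually (\<lambda>t. C (c * t) / A t \<le> ennreal e) at_top"
        using ev eventually_gt_at_top[of 0]
      proof eventually_elim
        case (elim t)
        have BN: "B ((real N * c) * t) \<le> ennreal e * A t" using L1[OF elim(1) e] .
        have "C (c * t) \<le> ennreal e * A t"
          unfolding C_def
        proof (rule SUP_least)
          fix n :: nat
          show "D n (c * t) \<le> ennreal e * A t"
          proof (cases "c * t \<le> T n")
            case True then show ?thesis using D0 by simp
          next
            case cT: False
            have mx: "max 0 (c * t - T n) \<le> c * t" "max 0 (c * t - T n) = c * t - T n"
              using cT T1[of n] by auto
            show ?thesis
            proof (cases "n < N")
              case True
              have "real n * max 0 (c * t - T n) \<le> real N * (c * t)"
                using True mx cT T1[of n] by (intro mult_mono) auto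
              then have "D n (c * t) \<le> B ((real N * c) * t)"
                unfolding D_def using YB by (intro yf_mono) (auto simp: mult.assoc)
              then show ?thesis using BN by simp
            next
              case False
              then have nN: "real n \<ge> real N" by simp
              have npos: "real n > 0" using nN N1 by simp
              have "real n * S n < c * t" using cT T1[of n] by simp
              also have "\<dots> \<le> real n * t" using nN N1 elim(2) by (intro mult_right_mono) auto
              finally have tS: "t \<ge> S n" using npos by simp
              have "real n * max 0 (c * t - T n) \<le> (real n + 1)^2 * t"
              proof -
                have "real n * max 0 (c * t - T n) \<le> real n * (c * t)"
                  using mx npos by (intro mult_left_mono) auto
                also have "\<dots> = (real n * c) * t" by simp
                also have "\<dots> \<le> (real n + 1)^2 * t"
                proof (rule mult_right_mono)
                  have "real n * c \<le> real n * real n" using nN N1 npos by (intro mult_left_mono) auto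
                  also have "\<dots> \<le> (real n + 1)^2" by (simp add: power2_eq_square algebra_simps)
                  finally show "real n * c \<le> (real n + 1)^2" .
                qed (use elim in auto)
                finally show ?thesis .
              qed
              then have "D n (c * t) \<le> B ((real n + 1)^2 * t)"
                unfolding D_def using YB by (intro yf_mono) auto
              also have "\<dots> \<le> ennreal (1 / (real n + 1)) * A t"
                using L1[OF S[OF tS]] by simp
              also have "\<dots> \<le> ennreal e * A t"
              proof (intro mult_right_mono ennreal_leI)
                have "1 / e < real n + 1" using N1 nN by linarith
                then show "1 / (real n + 1) \<le> e" using e npos
                  by (simp add: divide_le_eq mult.commute pos_divide_less_eq)
              qed simp
              finally show ?thesis .
            qed
          qed
        qed
        then show ?case using e by (intro L2) auto
      qed
    qed
  qed
  show ?thesis using YC BC CA by blast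
qed

end
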